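(* Let $p$ be a prime and let $a,b,c$ be positive integers with $b>1$, $c\mid p^a-1$, $c$ a primitive divisor of $p^a-1$, and $p-1\mid c$. Put $m=ab$, $n=bc$, $u=\frac{p^a-1}{c}$, and assume $n\mid p^m-1$ and $n$ is a primitive divisor of $p^m-1$; put $k=\frac{p^m-1}{n}$. Let $\mathcal{C}=\mathcal{C}(k,p^m)$ and $\mathcal{C}_0=\mathcal{C}(u,p^a)$. Suppose the distinct weights occurring in $\mathcal{C}_0$ (including $0$) are $w_1,\dots,w_s$ with frequencies $A_{w_i}(\mathcal{C}_0)=m_i$. Then the weights of $\mathcal{C}$ are exactly the numbers $w_{\ell_1,\dots,\ell_s}=\ell_1w_1+\cdots+\ell_sw_s$ with $(\ell_1,\dots,\ell_s)\in\mathbb{N}_0^s$ and $\ell_1+\cdots+\ell_s=b$, and the tuple $(\ell_1,\dots,\ell_s)$ contributes frequency $\binom{b}{\ell_1,\dots,\ell_s}m_1^{\ell_1}\cdots m_s^{\ell_s}$; i.e. for every integer $w$, $$A_w(\mathcal{C})=\sum_{\substack{\ell_1+\cdots+\ell_s=b\\ \ell_1w_1+\cdots+\ell_sw_s=w}}\binom{b}{\ell_1,\dots,\ell_s}m_1^{\ell_1}\cdots m_s^{\ell_s}.$$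
   Context: Let $p$ be prime, $q=p^m$, $\omega$ a primitive element of $\mathbb{F}_q$, $k\mid q-1$, $n=\frac{q-1}{k}$. The irreducible cyclic code $\mathcal{C}(k,q)\subseteq\mathbb{F}_p^n$ consists of the words $c_\gamma=(\mathrm{Tr}_{q/p}(\gamma\,\omega^{ki}))_{i=0}^{n-1}$, $\gamma\in\mathbb{F}_q$. The weight $w(c)$ of a word is its number of nonzero coordinates, and the frequency of a weight is $A_w=\#\{\gamma\in\mathbb{F}_q: w(c_\gamma)=w\}$. A positive integer $d$ is a primitive divisor of $p^m-1$ if $d\mid p^m-1$ and $d\nmid p^t-1$ for all $1\le t<m$. $\binom{b}{\ell_1,\dots,\ell_s}$ is the multinomial coefficient. *)

theory Defs
  imports "HOL-Computational_Algebra.Primes" "HOL-Library.FuncSet"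
begin

definition trace_pm :: "nat \<Rightarrow> nat \<Rightarrow> 'a::field \<Rightarrow> 'a" where
  "trace_pm p m x = (\<Sum>j<m. x ^ (p ^ j))"

definition primitive_elem :: "'a::field \<Rightarrow> bool" where
  "primitive_elem \<omega> \<longleftrightarrow> \<omega> \<noteq> 0 \<and> (\<forall>x. x \<noteq> 0 \<longrightarrow> (\<exists>i::nat. x = \<omega> ^ i))"

definition primitive_divisor :: "nat \<Rightarrow> nat \<Rightarrow> nat \<Rightarrow> bool" where
  "primitive_divisor p m d \<longleftrightarrow> d dvd p ^ m - 1 \<and> (\<forall>t. 1 \<le> t \<and> t < m \<longrightarrow> \<not> d dvd p ^ t - 1)"

text \<open>Weight of the codeword c_gamma of C(k, p^m), length n = (p^m-1)/k.\<close>
definition cweight :: "nat \<Rightarrow> nat \<Rightarrow> nat \<Rightarrow> 'a::field \<Rightarrow> 'a \<Rightarrow> nat" where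
  "cweight p m k \<omega> \<gamma> = card {i. i < (p ^ m - 1) div k \<and> trace_pm p m (\<gamma> * \<omega> ^ (k * i)) \<noteq> 0}"

definition freq :: "nat \<Rightarrow> nat \<Rightarrow> nat \<Rightarrow> 'a::{finite,field} \<Rightarrow> nat \<Rightarrow> nat" where
  "freq p m k \<omega> w = card {\<gamma>::'a. cweight p m k \<omega> \<gamma> = w}"

definition multinom :: "nat \<Rightarrow> ('i \<Rightarrow> nat) \<Rightarrow> 'i set \<Rightarrow> nat" where
  "multinom b l I = fact b div (\<Prod>i\<in>I. fact (l i))"

end

theory Submission
  imports Defs "HOL-Computational_Algebra.Polynomial" "HOL-Combinatorics.Multiset_Permutations"
begin


lemma of_nat_card_eq_0: "of_nat (card (UNIV::'F::{finite,field} set)) = (0::'F)"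
proof -
  have "(\<Sum>y\<in>UNIV. y + 1) = (\<Sum>y\<in>(UNIV::'F set). y)"
    by (rule sum.reindex_bij_witness[of _ "\<lambda>y. y - 1" "\<lambda>y. y + 1"]) auto
  then show ?thesis by (simp add: sum.distrib)
qed

lemma CHAR_eq:
  assumes "prime p" "card (UNIV::'F::{finite,field} set) = p ^ e"
  shows "CHAR('F) = p"
proof -
  have "of_nat (card (UNIV::'F set)) = (0::'F)" by (rule of_nat_card_eq_0)
  hence "CHAR('F) dvd p ^ e" using assms(2)
    by (metis of_nat_eq_0_iff_char_dvd)
  moreover have "prime CHAR('F)"
  proof -
    have "CHAR('F) > 0" by (rule finite_imp_CHAR_pos) simp
    thus ?thesis using prime_CHAR_semidom by blast
  qed
  ultimately have "CHAR('F) dvd p" using prime_dvd_power by blast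
  thus ?thesis using assms(1) \<open>prime CHAR('F)\<close> primes_dvd_imp_eq by blast
qed

lemma field_pow_card:
  fixes x :: "'F::{finite,field}"
  shows "x ^ card (UNIV :: 'F set) = x"
proof (cases "x = 0")
  case False
  have "x * (\<Prod>y\<in>UNIV-{0}. x * y) = x * x ^ (card (UNIV :: 'F set) - 1) * \<Prod>(UNIV-{0})"
    by (simp add: prod.distrib mult_ac)
  also have "x * x ^ (card (UNIV :: 'F set) - 1) = x ^ Suc (card (UNIV :: 'F set) - 1)"
    by (subst power_Suc) auto
  also have "Suc (card (UNIV :: 'F set) - 1) = card (UNIV :: 'F set)"
    using finite_UNIV_card_ge_0[where ?'a = 'F] by simp
  also have "(\<Prod>y\<in>UNIV-{0}. x * y) = (\<Prod>y\<in>UNIV-{0}. y)"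
    by (rule prod.reindex_bij_witness[of _ "\<lambda>y. y / x" "\<lambda>y. x * y"]) (use False in auto)
  finally show ?thesis
    by simp
qed (use finite_UNIV_card_ge_0[where ?'a = 'F] in auto)

lemma card_ge2: "card (UNIV::'F::{finite,field} set) \<ge> 2"
proof -
  have "{0,1} \<subseteq> (UNIV::'F set)" by auto
  hence "card {0::'F,1} \<le> card (UNIV::'F set)" by (intro card_mono) auto
  thus ?thesis by simp
qed

lemma field_pow_card1:
  fixes x :: "'F::{finite,field}"
  assumes "x \<noteq> 0"
  shows "x ^ (card (UNIV :: 'F set) - 1) = 1"
proof -
  have "x * x ^ (card (UNIV :: 'F set) - 1) = x * 1"
    using field_pow_card[of x] card_ge2[where 'F='F]
    by (metis One_nat_def Suc_diff_le le_trans mult.right_neutral one_le_numeral power_Suc diff_Suc_Suc minus_nat.diff_0)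
  thus ?thesis using assms by simp
qed

lemma of_nat_pow_char:
  assumes "CHAR('F::field) = p" "prime p"
  shows "(of_nat n :: 'F) ^ p = of_nat n"
proof (induction n)
  case 0 thus ?case using assms prime_gt_0_nat by (simp add: power_0_left)
next
  case (Suc n)
  have e: "(of_nat (Suc n) :: 'F) = of_nat n + 1" by simp
  have "(of_nat n + 1 :: 'F) ^ p = of_nat n ^ p + 1 ^ p" using assms by (intro freshmans_dream) auto
  thus ?case unfolding e using Suc by simp
qed

lemma of_int_pow_char:
  assumes "CHAR('F::field) = p" "prime p"
  shows "(of_int c :: 'F) ^ (p ^ j) = of_int c"
proof -
  have "(of_int c :: 'F) = of_int (c mod int p) + of_int (int p) * of_int (c div int p)"
    by (metis mod_mult_div_eq of_int_add of_int_mult)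
  also have "\<dots> = of_int (c mod int p)"
  proof -
    have "(of_int (int p) :: 'F) = 0" using assms(1) by (metis of_int_of_nat_eq of_nat_CHAR)
    thus ?thesis by simp
  qed
  also have "\<dots> = of_nat (nat (c mod int p))"
    using assms(2) by (simp add: prime_gt_0_nat)
  finally have eq: "(of_int c :: 'F) = of_nat (nat (c mod int p))" .
  show ?thesis
  proof (induction j)
    case 0 thus ?case by simp
  next
    case (Suc j)
    have "(of_int c :: 'F) ^ (p ^ Suc j) = ((of_int c :: 'F) ^ (p ^ j)) ^ p"
      by (metis power_Suc power_mult mult.commute)
    also have "\<dots> = (of_int c :: 'F) ^ p" using Suc by simp
    also have "\<dots> = of_int c" unfolding eq using of_nat_pow_char[OF assms] .
    finally show ?case .
  qed
qed

lemma poly_frob1: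
  fixes Q :: "'F::field poly"
  assumes "CHAR('F) = p" "prime p" "\<And>i. coeff Q i ^ (p ^ e) = coeff Q i"
  shows "poly Q (z ^ (p ^ e)) = (poly Q z) ^ (p ^ e)"
proof -
  have "(poly Q z) ^ (p ^ e) = (\<Sum>i\<le>degree Q. coeff Q i * z ^ i) ^ (p ^ e)"
    by (simp add: poly_altdef)
  also have "\<dots> = (\<Sum>i\<le>degree Q. (coeff Q i * z ^ i) ^ (p ^ e))"
    using assms by (intro freshmans_dream_sum') auto
  also have "\<dots> = (\<Sum>i\<le>degree Q. coeff Q i * (z ^ (p ^ e)) ^ i)"
    using assms(3) by (simp add: power_mult_distrib flip: power_mult) (simp add: mult.commute)
  finally show ?thesis by (simp add: poly_altdef)
qed

lemma poly_frob:
  fixes Q :: "'F::field poly"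
  assumes "CHAR('F) = p" "prime p" "\<And>i. coeff Q i ^ (p ^ e) = coeff Q i"
  shows "poly Q (z ^ (p ^ (e * i))) = (poly Q z) ^ (p ^ (e * i))"
proof (induction i)
  case 0 thus ?case by simp
next
  case (Suc i)
  have ps: "p ^ (e * Suc i) = p ^ (e*i) * p ^ e" by (simp add: power_add mult.commute)
  hence "z ^ (p ^ (e * Suc i)) = (z ^ (p ^ (e * i))) ^ (p ^ e)"
    by (simp add: power_mult)
  hence "poly Q (z ^ (p ^ (e * Suc i))) = poly Q (z ^ (p ^ (e * i))) ^ (p ^ e)"
    using poly_frob1[OF assms] by simp
  also have "\<dots> = poly Q z ^ (p ^ (e * Suc i))"
    using Suc ps by (simp add: power_mult)
  finally show ?case .
qed

lemma indep_lemma: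
  fixes Q :: "'F::field poly"
  assumes "CHAR('F) = p" "prime p" "\<And>i. coeff Q i ^ (p ^ e) = coeff Q i"
    and "degree Q < d" "poly Q z = 0" "inj_on (\<lambda>i. z ^ (p ^ (e * i))) {..<d}"
  shows "Q = 0"
proof (rule ccontr)
  assume Q: "Q \<noteq> 0"
  have "(\<lambda>i. z ^ (p ^ (e * i))) ` {..<d} \<subseteq> {x. poly Q x = 0}"
    using poly_frob[OF assms(1-3)] assms(5) assms(2) by (auto simp: prime_gt_0_nat)
  hence "card ((\<lambda>i. z ^ (p ^ (e * i))) ` {..<d}) \<le> card {x. poly Q x = 0}"
    by (intro card_mono poly_roots_finite Q)
  also have "\<dots> \<le> degree Q" by (rule card_poly_roots_bound[OF Q])
  finally show False using card_image[OF assms(6)] assms(4) by simp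
qed



lemma pow_mod_eq: assumes "x ^ r = (1::'a::monoid_mult)" shows "x ^ i = x ^ (i mod r)"
proof -
  have "x ^ i = x ^ (r * (i div r) + i mod r)" by simp
  also have "\<dots> = x^(r*(i div r)) * x^(i mod r)" by (rule power_add)
  also have "x^(r*(i div r)) = (x^r)^(i div r)" by (rule power_mult)
  finally show ?thesis using assms by simp
qed

lemma ord_lemma:
  fixes x :: "'F::field"
  assumes "N > 0" "\<And>i. x ^ i = 1 \<longleftrightarrow> N dvd i"
  shows "x ^ s = x ^ t \<longleftrightarrow> s mod N = t mod N"
proof
  have xN: "x ^ N = 1" using assms by simp
  have x0: "x \<noteq> 0"
  proof
    assume "x = 0"
    hence "x ^ N = 0" using assms(1) by simp
    with xN show False by simp
  qed
  assume st: "x ^ s = x ^ t"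
  define s' t' where "s' = s mod N" "t' = t mod N"
  have e: "x ^ s' = x ^ t'" using st pow_mod_eq[OF xN, of s] pow_mod_eq[OF xN, of t]
    unfolding s'_t'_def by simp
  have lt: "s' < N" "t' < N" unfolding s'_t'_def using assms(1) by auto
  have "s' = t'"
  proof (rule ccontr)
    assume "s' \<noteq> t'"
    hence "s' < t' \<or> t' < s'" by auto
    thus False
    proof
      assume "s' < t'"
      hence "x ^ t' = x ^ s' * x ^ (t' - s')" by (simp add: power_add[symmetric])
      hence "x ^ (t' - s') = 1" using e x0 by simp
      hence "N dvd (t' - s')" using assms by simp
      thus False using \<open>s' < t'\<close> lt by (simp add: nat_dvd_not_less)
    next
      assume "t' < s'"
      hence "x ^ s' = x ^ t' * x ^ (s' - t')" by (simp add: power_add[symmetric])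
      hence "x ^ (s' - t') = 1" using e x0 by simp
      hence "N dvd (s' - t')" using assms by simp
      thus False using \<open>t' < s'\<close> lt by (simp add: nat_dvd_not_less)
    qed
  qed
  thus "s mod N = t mod N" unfolding s'_t'_def .
next
  have xN: "x ^ N = 1" using assms by simp
  assume "s mod N = t mod N"
  thus "x ^ s = x ^ t" using pow_mod_eq[OF xN, of s] pow_mod_eq[OF xN, of t] by simp
qed

lemma prim_pow_one:
  fixes \<omega> :: "'F::{finite,field}"
  assumes "primitive_elem \<omega>" "0 < r" "\<omega> ^ r = 1"
  shows "card (UNIV::'F set) - 1 \<le> r"
proof -
  have "UNIV - {0} \<subseteq> (\<lambda>i. \<omega> ^ i) ` {..<r}"
  proof
    fix x :: 'F assume "x \<in> UNIV - {0}"
    then obtain i where "x = \<omega> ^ i" using assms(1) unfolding primitive_elem_def by auto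
    also have "\<omega> ^ i = \<omega> ^ (i mod r)" by (rule pow_mod_eq[OF assms(3)])
    finally show "x \<in> (\<lambda>i. \<omega>^i) ` {..<r}" using assms(2) by auto
  qed
  hence "card (UNIV - {0::'F}) \<le> card {..<r}"
    by (meson card_image_le card_mono finite_imageI finite_lessThan le_trans)
  thus ?thesis by (simp add: card_Diff_singleton)
qed

lemma prim_pow_eq_1:
  fixes \<omega> :: "'F::{finite,field}"
  assumes "primitive_elem \<omega>"
  shows "\<omega> ^ i = 1 \<longleftrightarrow> (card (UNIV::'F set) - 1) dvd i"
proof -
  let ?N = "card (UNIV::'F set) - 1"
  have N: "?N > 0" using card_ge2[where 'F='F] by linarith
  have w0: "\<omega> \<noteq> 0" using assms unfolding primitive_elem_def by auto
  have wN: "\<omega> ^ ?N = 1" using field_pow_card1[OF w0] .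
  show ?thesis
  proof
    assume "\<omega> ^ i = 1"
    hence "\<omega> ^ (i mod ?N) = 1" using pow_mod_eq[OF wN, of i] by simp
    moreover have "i mod ?N < ?N" using N by simp
    ultimately have "i mod ?N = 0" using prim_pow_one[OF assms, of "i mod ?N"] by (meson leD neq0_conv)
    thus "?N dvd i" by auto
  next
    assume "?N dvd i"
    then obtain t where "i = ?N * t" by auto
    thus "\<omega> ^ i = 1" using wN by (simp add: power_mult)
  qed
qed



lemma map_poly_of_int_add:
  "map_poly (of_int::int\<Rightarrow>'F::comm_ring_1) (P + Q) = map_poly of_int P + map_poly of_int Q"
  by (rule poly_eqI) (simp add: coeff_map_poly)

lemma map_poly_of_int_diff:
  "map_poly (of_int::int\<Rightarrow>'F::comm_ring_1) (P - Q) = map_poly of_int P - map_poly of_int Q"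
  by (rule poly_eqI) (simp add: coeff_map_poly)

lemma map_poly_of_int_mult:
  "map_poly (of_int::int\<Rightarrow>'F::comm_ring_1) (P * Q) = map_poly of_int P * map_poly of_int Q"
  by (rule poly_eqI) (simp add: coeff_map_poly coeff_mult)

lemma coeff_sum_monom: "coeff (\<Sum>i<d. monom (c i) i) j = (if j < d then c j else 0)"
  by (simp add: coeff_sum coeff_monom)

lemma degree_sum_monom: assumes "d > 0" shows "degree (\<Sum>i<d. monom (c i) i) < d"
proof (rule degree_lessI)
  show "(\<Sum>i<d. monom (c i) i) \<noteq> 0 \<or> d > 0" using assms by simp
  show "\<forall>k\<ge>d. coeff (\<Sum>i<d. monom (c i) i) k = 0" by (simp add: coeff_sum_monom)
qed

lemma poly_sum_monom: "poly (\<Sum>i<d. monom (c i) i) (z::'F::comm_semiring_1) = (\<Sum>i<d. c i * z ^ i)"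
  by (simp add: poly_sum poly_monom)

locale setting =
  fixes p a b c :: nat and \<omega> :: "'a::{finite,field}" and \<omega>0 :: "'b::{finite,field}"
  assumes pp: "prime p" and a0: "a > 0" and b1: "b > 1" and c0: "c > 0"
    and pdc: "primitive_divisor p a c"
    and pdn: "primitive_divisor p (a * b) (b * c)"
    and cardA: "card (UNIV::'a set) = p ^ (a * b)" and cardB: "card (UNIV::'b set) = p ^ a"
    and prim: "primitive_elem \<omega>" and prim0: "primitive_elem \<omega>0"
begin

definition "k = (p ^ (a*b) - 1) div (b*c)"
definition "u = (p ^ a - 1) div c"
definition "g = \<omega> ^ k"
definition "h = g ^ b"
definition "K = {x::'a. x ^ (p^a) = x}"
definition T :: "'a \<Rightarrow> 'a" where "T x = (\<Sum>l<b. x ^ (p^(a*l)))"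

lemma charA: "CHAR('a) = p" by (rule CHAR_eq[OF pp cardA])
lemma charB: "CHAR('b) = p" by (rule CHAR_eq[OF pp cardB])
lemma p2: "p \<ge> 2" using pp by (rule prime_ge_2_nat)
lemma b0: "b > 0" using b1 by simp

lemma pow_gt1: "0 < e \<Longrightarrow> p ^ e > 1"
  using p2 by (intro one_less_power) auto

lemma qk: "p^(a*b) - 1 = k * (b*c)"
  using pdn unfolding primitive_divisor_def k_def by simp

lemma k0: "k > 0"
proof -
  have "p^(a*b) > 1" using pow_gt1 a0 b0 by simp
  thus ?thesis using qk by (cases k) auto
qed

lemma pu: "p^a - 1 = u * c"
  using pdc unfolding primitive_divisor_def u_def by simp

lemma u0: "u > 0"
proof -
  have "p^a > 1" using pow_gt1 a0 by simp
  thus ?thesis using pu by (cases u) auto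
qed

lemma frobA: "(x + y :: 'a) ^ (p ^ j) = x ^ (p ^ j) + y ^ (p ^ j)"
  using charA pp by (intro freshmans_dream') auto

lemma frobA_sum: "(\<Sum>i\<in>I. f i :: 'a) ^ (p ^ j) = (\<Sum>i\<in>I. f i ^ (p ^ j))"
  using charA pp by (intro freshmans_dream_sum') auto

lemma frobB: "(x + y :: 'b) ^ (p ^ j) = x ^ (p ^ j) + y ^ (p ^ j)"
  using charB pp by (intro freshmans_dream') auto

lemma g_pow1: "g ^ i = 1 \<longleftrightarrow> (b*c) dvd i"
proof -
  have "g ^ i = \<omega> ^ (k * i)" unfolding g_def by (simp add: power_mult)
  also have "\<dots> = 1 \<longleftrightarrow> (p^(a*b) - 1) dvd (k * i)" using prim_pow_eq_1[OF prim] cardA by simp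
  also have "\<dots> \<longleftrightarrow> (b*c) dvd i" unfolding qk using k0 by (simp add: mult.commute[of k])
  finally show ?thesis .
qed

lemma h_pow1: "h ^ t = 1 \<longleftrightarrow> c dvd t"
proof -
  have "h ^ t = g ^ (b * t)" unfolding h_def by (simp add: power_mult)
  thus ?thesis using g_pow1 b0 by simp
qed

lemma coprime_n_p: "coprime (b*c) p"
proof -
  have "(b*c) dvd p^(a*b) - 1" using pdn unfolding primitive_divisor_def by simp
  moreover have "coprime (p^(a*b) - 1) p"
    using coprime_diff_one_left_nat[of "p^(a*b)"] p2 a0 b0 by simp
  ultimately show ?thesis by (rule coprime_divisors[OF _ dvd_refl])
qed

end


lemma conj_inj:
  fixes x :: "'F::field"
  assumes cop: "coprime N p" and N0: "N > 0" and ord: "\<And>i. x ^ i = 1 \<longleftrightarrow> N dvd i"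
    and prm: "\<And>t. 1 \<le> t \<Longrightarrow> t < e*d \<Longrightarrow> \<not> N dvd p^t - 1" and e0: "e > 0" and p0: "p > 0"
  shows "inj_on (\<lambda>i. x ^ (p ^ (e*i))) {..<d}"
proof -
  have key: "False" if ij: "i < j" "j < d" and eq: "x ^ (p ^ (e*i)) = x ^ (p ^ (e*j))" for i j
  proof -
    have m: "p ^ (e*j) mod N = p ^ (e*i) mod N" using eq ord_lemma[of N x, OF N0 ord] by simp
    have le: "p^(e*i) \<le> p^(e*j)" using ij p0 by (intro power_increasing) auto
    have d1: "N dvd p^(e*j) - p^(e*i)" using m mod_eq_dvd_iff_nat[OF le] by simp
    have "e*j = e*i + e*(j-i)" using ij by (simp add: diff_mult_distrib2)
    hence pj: "p^(e*j) = p^(e*i) * p^(e*(j-i))" by (simp only: power_add)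
    have "p^(e*j) - p^(e*i) = p^(e*i) * p^(e*(j-i)) - p^(e*i) * 1" by (simp only: pj mult_1_right)
    also have "\<dots> = p^(e*i) * (p^(e*(j-i)) - 1)" by (rule diff_mult_distrib2[symmetric])
    finally have "p^(e*j) - p^(e*i) = p^(e*i) * (p^(e*(j-i)) - 1)" .
    hence "N dvd p^(e*i) * (p^(e*(j-i)) - 1)" using d1 by simp
    moreover have "coprime N (p^(e*i))" using cop by simp
    ultimately have "N dvd p^(e*(j-i)) - 1" using coprime_dvd_mult_right_iff by blast
    moreover have "1 \<le> e*(j-i)" using ij e0 by simp
    moreover have "e*(j-i) < e*d" using ij e0 by simp
    ultimately show False using prm by blast
  qed
  show ?thesis
  proof (rule inj_onI)
    fix i j assume "i \<in> {..<d}" "j \<in> {..<d}" "x ^ (p ^ (e*i)) = x ^ (p ^ (e*j))"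
    thus "i = j" using key[of i j] key[of j i] by (cases i j rule: linorder_cases) auto
  qed
qed

context setting
begin

lemma g_inj: "inj_on (\<lambda>i. g ^ (p ^ (a*i))) {..<b}"
proof (rule conj_inj[OF coprime_n_p])
  show "0 < b*c" using b0 c0 by simp
  show "\<And>i. g ^ i = 1 \<longleftrightarrow> (b*c) dvd i" by (rule g_pow1)
  show "\<And>t. 1 \<le> t \<Longrightarrow> t < a*b \<Longrightarrow> \<not> (b*c) dvd p^t - 1"
    using pdn unfolding primitive_divisor_def by blast
  show "a > 0" by (rule a0)
  show "p > 0" using p2 by simp
qed

lemma w0_pow1: "\<omega>0 ^ i = 1 \<longleftrightarrow> (p^a - 1) dvd i"
  using prim_pow_eq_1[OF prim0] cardB by simp

lemma w0_inj: "inj_on (\<lambda>i. \<omega>0 ^ (p ^ (1*i))) {..<a}"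
proof (rule conj_inj)
  show "coprime (p^a - 1) p" using coprime_diff_one_left_nat[of "p^a"] p2 a0 by simp
  show "0 < p^a - 1" using pow_gt1[OF a0] by simp
  show "\<And>i. \<omega>0 ^ i = 1 \<longleftrightarrow> (p^a - 1) dvd i" by (rule w0_pow1)
  show "\<not> (p^a - 1) dvd p^t - 1" if "1 \<le> t" "t < 1*a" for t
  proof
    assume "(p^a - 1) dvd p^t - 1"
    moreover have "p^t > 1" using pow_gt1 that by simp
    moreover have "p^t < p^a" using that p2 by (intro power_strict_increasing) auto
    ultimately have "p^a - 1 \<le> p^t - 1" by (intro dvd_imp_le) auto
    thus False using \<open>p^t > 1\<close> \<open>p^t < p^a\<close> by linarith
  qed
  show "(1::nat) > 0" by simp
  show "p > 0" using p2 by simp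
qed

lemma powA_q: "(x::'a) ^ (p^(a*b)) = x"
  using field_pow_card[of x] cardA by simp

lemma powB: "(x::'b) ^ (p^a) = x"
  using field_pow_card[of x] cardB by simp

lemma K_pow: "x \<in> K \<Longrightarrow> x ^ (p^(a*l)) = x"
proof (induction l)
  case 0 thus ?case by simp
next
  case (Suc l)
  have "p^(a*Suc l) = p^(a*l) * p^a" by (simp add: power_add mult.commute)
  hence "x ^ (p^(a*Suc l)) = (x ^ (p^(a*l))) ^ (p^a)" by (simp add: power_mult)
  thus ?case using Suc unfolding K_def by simp
qed

lemma K_mult: "x \<in> K \<Longrightarrow> y \<in> K \<Longrightarrow> x * y \<in> K"
  unfolding K_def by (simp add: power_mult_distrib)

lemma K_add: "x \<in> K \<Longrightarrow> y \<in> K \<Longrightarrow> x + y \<in> K"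
  unfolding K_def by (simp add: frobA)

lemma K_0: "0 \<in> K" unfolding K_def using p2 by simp
lemma K_1: "1 \<in> K" unfolding K_def by simp

lemma K_diff: assumes "x \<in> K" "y \<in> K" shows "x - y \<in> K"
proof -
  have "(x - y) ^ (p^a) + y ^ (p^a) = x ^ (p^a)" using frobA[of "x - y" y a] by simp
  thus ?thesis using assms unfolding K_def by (simp add: eq_diff_eq)
qed

lemma K_power: "x \<in> K \<Longrightarrow> x ^ t \<in> K"
  by (induction t) (auto intro: K_mult K_1)

lemma h_K: "h \<in> K"
proof -
  have "h ^ (p^a - 1) = 1" using h_pow1 pu by simp
  moreover have "p^a = Suc (p^a - 1)" using pow_gt1[OF a0] by simp
  ultimately have "h ^ (p^a) = h" by (metis power_Suc mult_1_right)
  thus ?thesis unfolding K_def by simp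
qed

lemma T_add: "T (x + y) = T x + T y"
  unfolding T_def by (simp add: frobA sum.distrib)

lemma T_0: "T 0 = 0"
  unfolding T_def using p2 by (simp add: power_0_left)

lemma T_diff: "T (x - y) = T x - T y"
proof -
  have "T (x - y) + T y = T x" using T_add[of "x - y" y] by simp
  thus ?thesis by (simp add: eq_diff_eq)
qed

lemma T_scal: "l \<in> K \<Longrightarrow> T (l * x) = l * T x"
  unfolding T_def by (simp add: power_mult_distrib K_pow sum_distrib_left)

lemma T_K: "T x \<in> K"
proof -
  obtain b' where bb: "b = Suc b'" using b0 by (cases b) auto
  define f where "f l = x ^ (p^(a*l))" for l
  have "T x ^ (p^a) = (\<Sum>l<b. (x ^ (p^(a*l))) ^ (p^a))" unfolding T_def by (rule frobA_sum)
  also have "\<dots> = (\<Sum>l<b. f (Suc l))"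
  proof (rule sum.cong[OF refl])
    fix l
    have "p^(a*Suc l) = p^(a*l) * p^a" by (simp add: power_add mult.commute)
    thus "(x ^ (p^(a*l))) ^ (p^a) = f (Suc l)" unfolding f_def by (simp add: power_mult)
  qed
  also have "\<dots> = (\<Sum>l<b'. f (Suc l)) + f b" unfolding bb by simp
  also have "f b = f 0" unfolding f_def using powA_q by simp
  also have "(\<Sum>l<b'. f (Suc l)) + f 0 = (\<Sum>l<b. f l)"
    unfolding bb lessThan_atLeast0 sum.atLeast0_lessThan_Suc_shift by (simp add: add.commute comp_def)
  also have "\<dots> = T x" unfolding T_def f_def ..
  finally show ?thesis unfolding K_def by simp
qed

lemma trace_T: "trace_pm p (a*b) x = trace_pm p a (T x)"
proof -
  define F where "F j = x ^ (p ^ j)" for j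
  have "trace_pm p a (T x) = (\<Sum>i<a. \<Sum>l<b. F (a*l + i))"
    unfolding trace_pm_def T_def F_def
    by (simp add: frobA_sum power_add flip: power_mult)
  also have "\<dots> = (\<Sum>(i,l)\<in>{..<a}\<times>{..<b}. F (a*l + i))"
    by (rule sum.cartesian_product)
  also have "\<dots> = (\<Sum>j<a*b. F j)"
  proof -
    have aux: "a*l + i < a*b" if "i < a" "l < b" for i l
    proof -
      have "a*l + i < a*(l+1)" using that by simp
      also have "\<dots> \<le> a*b" using that by (intro mult_le_mono2) simp
      finally show ?thesis .
    qed
    have aux2: "j div a < b" if "j < a*b" for j
      using that by (simp add: less_mult_imp_div_less mult.commute)
    show ?thesis
      by (rule sum.reindex_bij_witness[of _ "\<lambda>j. (j mod a, j div a)" "\<lambda>(i,l). a*l + i"])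
         (use a0 aux aux2 in auto)
  qed
  also have "\<dots> = trace_pm p (a*b) x" unfolding trace_pm_def F_def ..
  finally show ?thesis by simp
qed

end


lemma map_poly_of_int_sum:
  "map_poly (of_int::int\<Rightarrow>'F::comm_ring_1) (\<Sum>i\<in>I. P i) = (\<Sum>i\<in>I. map_poly of_int (P i))"
  by (rule poly_eqI) (simp add: coeff_map_poly coeff_sum)

lemma map_poly_of_int_monom:
  "map_poly (of_int::int\<Rightarrow>'F::comm_ring_1) (monom c n) = monom (of_int c) n"
  by (simp add: map_poly_monom)

lemma dvd_diff_small:
  assumes "int p dvd int x - int y" "x < p" "y < p"
  shows "x = y"
proof -
  have "int x mod int p = int y mod int p" using assms(1) by (simp add: mod_eq_dvd_iff)
  hence "int (x mod p) = int (y mod p)" by (simp add: of_nat_mod)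
  thus ?thesis using assms by simp
qed

lemma linear_prod_eq:
  "(monom 1 (card (UNIV::'F set)) - monom 1 1 :: 'F::{finite,field} poly) = (\<Prod>x\<in>UNIV. [:-x, 1:])"
proof -
  let ?N = "card (UNIV::'F set)"
  have N2: "?N \<ge> 2" by (rule card_ge2)
  have degP: "degree (\<Prod>x\<in>(UNIV::'F set). [:-x, 1:]) = ?N"
    by (subst degree_prod_eq_sum_degree) auto
  have lcP: "lead_coeff (\<Prod>x\<in>(UNIV::'F set). [:-x, 1:]) = 1"
    by (simp add: lead_coeff_prod)
  show ?thesis
  proof (rule poly_eqI_degree_lead_coeff[of _ ?N _ UNIV])
    show "coeff (monom 1 ?N - monom 1 1 :: 'F poly) ?N = coeff (\<Prod>x\<in>UNIV. [:-x, 1:]) ?N"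
      using N2 lcP degP by (simp add: coeff_monom)
    show "?N \<le> card (UNIV::'F set)" by simp
    show "degree (monom 1 ?N - monom 1 1 :: 'F poly) \<le> ?N"
      using N2 by (intro degree_diff_le) (auto intro: order.trans[OF degree_monom_le])
    show "degree (\<Prod>x\<in>(UNIV::'F set). [:-x, 1:]) \<le> ?N" using degP by simp
    fix z :: 'F
    have "poly (monom 1 ?N - monom 1 1 :: 'F poly) z = z ^ ?N - z" by (simp add: poly_monom)
    also have "\<dots> = 0" using field_pow_card[of z] by simp
    also have "0 = poly (\<Prod>x\<in>UNIV. [:-x, 1:]) z"
    proof -
      have "poly (\<Prod>x\<in>UNIV. [:-x, 1:]) z = (\<Prod>x\<in>UNIV. z - x)" by (simp add: poly_prod)
      also have "\<dots> = 0" by (rule prod_zero) auto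
      finally show ?thesis by simp
    qed
    finally show "poly (monom 1 ?N - monom 1 1 :: 'F poly) z = poly (\<Prod>x\<in>UNIV. [:-x, 1:]) z" .
  qed
qed

lemma dvd_prod_root:
  fixes F :: "'F::field poly"
  assumes "finite A"
  shows "F dvd (\<Prod>x\<in>A. [:-x,1:]) \<Longrightarrow> degree F > 0 \<Longrightarrow> \<exists>x\<in>A. poly F x = 0"
using assms proof (induction A rule: finite_induct)
  case empty
  hence "is_unit F" by simp
  moreover have F0: "F \<noteq> 0" using empty by auto
  ultimately have "degree F = 0" using is_unit_iff_degree[OF F0] by simp
  thus ?case using empty by simp
next
  case (insert x A)
  show ?case
  proof (cases "poly F x = 0")
    case True thus ?thesis by blast
  next
    case False
    from insert.prems(1) obtain G where G: "[:-x,1:] * (\<Prod>y\<in>A. [:-y,1:]) = F * G"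
      using insert.hyps by (auto elim: dvdE)
    have "poly F x * poly G x = 0" using arg_cong[OF G, of "\<lambda>P. poly P x"] by simp
    hence "poly G x = 0" using False by simp
    then obtain G' where G': "G = [:-x,1:] * G'" by (auto simp: poly_eq_0_iff_dvd elim: dvdE)
    have "[:-x,1:] * (F * G') = F * G" unfolding G' by (rule mult.left_commute)
    hence "[:-x,1:] * (\<Prod>y\<in>A. [:-y,1:]) = [:-x,1:] * (F * G')" using G by simp
    moreover have nz: "[:-x,1::'F:] \<noteq> 0" by simp
    ultimately have "(\<Prod>y\<in>A. [:-y,1:]) = F * G'" using mult_left_cancel[OF nz] by blast
    hence "F dvd (\<Prod>y\<in>A. [:-y,1:])" by simp
    thus ?thesis using insert.IH insert.prems(2) by blast
  qed
qed

context setting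
begin

definition V :: "(nat \<Rightarrow> nat) \<Rightarrow> 'b" where "V cf = (\<Sum>i<a. of_nat (cf i) * \<omega>0 ^ i)"

abbreviation "SS \<equiv> PiE {..<a} (\<lambda>_. {0..<p})"

lemma of_int_pow_p1: "(of_int z :: 'F::field) ^ (p ^ 1) = of_int z" if "CHAR('F) = p"
  using of_int_pow_char[OF that pp, of z 1] .

lemma V_inj: "inj_on V SS"
proof (rule inj_onI)
  fix cf cf' assume cf: "cf \<in> SS" and cf': "cf' \<in> SS" and eq: "V cf = V cf'"
  define Q :: "'b poly" where "Q = (\<Sum>i<a. monom (of_int (int (cf i) - int (cf' i))) i)"
  have cQ: "coeff Q i = (if i < a then of_int (int (cf i) - int (cf' i)) else 0)" for i
    unfolding Q_def by (rule coeff_sum_monom)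
  have "Q = 0"
  proof (rule indep_lemma[OF charB pp, of Q 1 a \<omega>0])
    show "coeff Q i ^ (p^1) = coeff Q i" for i
    proof (cases "i < a")
      case True thus ?thesis unfolding cQ
        using of_int_pow_p1[OF charB, of "int (cf i) - int (cf' i)"] by simp
    next
      case False thus ?thesis unfolding cQ using p2 by (simp add: power_0_left)
    qed
    show "degree Q < a" unfolding Q_def by (rule degree_sum_monom[OF a0])
    show "poly Q \<omega>0 = 0" unfolding Q_def poly_sum_monom using eq unfolding V_def
      by (simp add: left_diff_distrib sum_subtractf)
    show "inj_on (\<lambda>i. \<omega>0 ^ (p ^ (1 * i))) {..<a}" by (rule w0_inj)
  qed
  show "cf = cf'"
  proof (rule PiE_ext[OF cf cf'])
    fix i assume i: "i \<in> {..<a}"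
    have "coeff Q i = 0" using \<open>Q = 0\<close> by simp
    hence "(of_int (int (cf i) - int (cf' i)) :: 'b) = 0" using cQ i by simp
    hence "int CHAR('b) dvd int (cf i) - int (cf' i)" by (simp only: of_int_eq_0_iff_char_dvd)
    hence "int p dvd int (cf i) - int (cf' i)" using charB by simp
    moreover have "cf i < p" "cf' i < p" using cf cf' i by (auto simp: PiE_iff)
    ultimately show "cf i = cf' i" by (rule dvd_diff_small)
  qed
qed

lemma V_surj: "V ` SS = UNIV"
proof -
  have "card SS = p ^ a" by (simp add: card_PiE)
  hence "card (V ` SS) = card (UNIV :: 'b set)" using card_image[OF V_inj] cardB by simp
  thus ?thesis by (intro card_subset_eq) auto
qed

lemma f_exists: "\<exists>f::int poly. degree f = a \<and> lead_coeff f = 1 \<and> poly (map_poly of_int f) \<omega>0 = 0"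
proof -
  obtain cf where cf: "cf \<in> SS" "V cf = - (\<omega>0 ^ a)" using V_surj by (metis UNIV_I imageE)
  define f :: "int poly" where "f = monom 1 a + (\<Sum>i<a. monom (int (cf i)) i)"
  have ds: "degree (\<Sum>i<a. monom (int (cf i)) i) < a" by (rule degree_sum_monom[OF a0])
  have df: "degree f = a" unfolding f_def
    using ds by (subst degree_add_eq_left) (auto simp: degree_monom_eq)
  have "lead_coeff f = 1" unfolding df unfolding f_def coeff_add coeff_sum_monom by simp
  moreover have "poly (map_poly of_int f) \<omega>0 = 0"
  proof -
    have "map_poly (of_int::int\<Rightarrow>'b) f = monom 1 a + (\<Sum>i<a. monom (of_nat (cf i)) i)"
      unfolding f_def map_poly_of_int_add map_poly_of_int_sum map_poly_of_int_monom by simp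
    hence "poly (map_poly of_int f) \<omega>0 = \<omega>0 ^ a + V cf"
      unfolding V_def by (simp add: poly_monom poly_sum_monom)
    thus ?thesis using cf by simp
  qed
  ultimately show ?thesis using df by blast
qed

definition "fp = (SOME f::int poly. degree f = a \<and> lead_coeff f = 1 \<and> poly (map_poly of_int f) \<omega>0 = 0)"

lemma fp: "degree fp = a" "lead_coeff fp = 1" "poly (map_poly of_int fp) \<omega>0 = 0"
  using someI_ex[OF f_exists] unfolding fp_def by auto

lemma f_div:
  assumes P: "poly (map_poly (of_int::int\<Rightarrow>'b) P) \<omega>0 = 0"
  shows "map_poly (of_int::int\<Rightarrow>'a) fp dvd map_poly of_int P"
proof -
  obtain q r where qr: "pseudo_divmod P fp = (q, r)" by (cases "pseudo_divmod P fp") auto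
  have f0: "fp \<noteq> 0" using fp(1) a0 by auto
  have Peq: "P = fp * q + r" using pseudo_divmod(1)[OF f0 qr] fp(2) by simp
  have rdeg: "r = 0 \<or> degree r < a" using pseudo_divmod(2)[OF f0 qr] fp(1) by simp
  have rB: "map_poly (of_int::int\<Rightarrow>'b) r = 0"
  proof (cases "r = 0")
    case True thus ?thesis by simp
  next
    case False
    have "poly (map_poly (of_int::int\<Rightarrow>'b) r) \<omega>0 = 0"
      using P fp(3) unfolding Peq map_poly_of_int_add map_poly_of_int_mult by simp
    thus ?thesis
    proof (intro indep_lemma[OF charB pp, of _ 1 a \<omega>0])
      show "coeff (map_poly of_int r) i ^ (p^1) = coeff (map_poly (of_int::int\<Rightarrow>'b) r) i" for i
        using of_int_pow_p1[OF charB, of "coeff r i"] by (simp add: coeff_map_poly)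
      show "degree (map_poly (of_int::int\<Rightarrow>'b) r) < a"
        using rdeg False map_poly_degree_leq[of "of_int::int\<Rightarrow>'b" r] by linarith
      show "inj_on (\<lambda>i. \<omega>0 ^ (p ^ (1 * i))) {..<a}" by (rule w0_inj)
    qed
  qed
  have rA: "map_poly (of_int::int\<Rightarrow>'a) r = 0"
  proof (rule poly_eqI)
    fix i
    have "coeff (map_poly (of_int::int\<Rightarrow>'b) r) i = 0" using rB by simp
    hence "int p dvd coeff r i" using charB by (simp add: coeff_map_poly of_int_eq_0_iff_char_dvd)
    hence "(of_int (coeff r i) :: 'a) = 0" using charA by (simp add: of_int_eq_0_iff_char_dvd)
    thus "coeff (map_poly (of_int::int\<Rightarrow>'a) r) i = coeff 0 i" by (simp add: coeff_map_poly)
  qed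
  have "map_poly (of_int::int\<Rightarrow>'a) P = map_poly of_int fp * map_poly of_int q"
    unfolding Peq map_poly_of_int_add map_poly_of_int_mult rA by simp
  thus ?thesis by simp
qed

lemma powB_l: "(x::'b) ^ (p^(a*l)) = x"
proof (induction l)
  case 0 thus ?case by simp
next
  case (Suc l)
  have "p^(a*Suc l) = p^(a*l) * p^a" by (simp add: power_add mult.commute)
  hence "x ^ (p^(a*Suc l)) = (x ^ (p^(a*l))) ^ (p^a)" by (simp add: power_mult)
  thus ?case using Suc powB by simp
qed

lemma map_Xn_X: "map_poly (of_int::int\<Rightarrow>'F::comm_ring_1) (monom 1 n - monom 1 1) = monom 1 n - monom 1 1"
  unfolding map_poly_of_int_diff map_poly_of_int_monom by simp

lemma theta_exists: "\<exists>\<theta>. poly (map_poly (of_int::int\<Rightarrow>'a) fp) \<theta> = 0 \<and> \<theta> \<in> K"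
proof -
  let ?F = "map_poly (of_int::int\<Rightarrow>'a) fp"
  have "poly (map_poly (of_int::int\<Rightarrow>'b) (monom 1 (p^(a*b)) - monom 1 1)) \<omega>0 = 0"
    unfolding map_Xn_X by (simp add: poly_monom powB_l)
  hence "?F dvd map_poly of_int (monom 1 (p^(a*b)) - monom 1 1)" by (rule f_div)
  hence d1: "?F dvd (\<Prod>x\<in>UNIV. [:-x,1:])" unfolding map_Xn_X linear_prod_eq[symmetric] cardA .
  have "degree ?F = a" using fp by (subst map_poly_degree_eq) auto
  then obtain \<theta> where th: "poly ?F \<theta> = 0" using dvd_prod_root[OF _ d1] a0 by auto
  have "poly (map_poly (of_int::int\<Rightarrow>'b) (monom 1 (p^a) - monom 1 1)) \<omega>0 = 0"
    unfolding map_Xn_X by (simp add: poly_monom powB)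
  hence "?F dvd map_poly of_int (monom 1 (p^a) - monom 1 1)" by (rule f_div)
  hence "poly (map_poly (of_int::int\<Rightarrow>'a) (monom 1 (p^a) - monom 1 1)) \<theta> = 0"
    using th by (auto elim: dvdE)
  hence "\<theta> \<in> K" unfolding map_Xn_X K_def by (simp add: poly_monom)
  thus ?thesis using th by blast
qed

end


context setting
begin

definition "th = (SOME \<theta>. poly (map_poly (of_int::int\<Rightarrow>'a) fp) \<theta> = 0 \<and> \<theta> \<in> K)"

lemma th: "poly (map_poly (of_int::int\<Rightarrow>'a) fp) th = 0" "th \<in> K"
  using someI_ex[OF theta_exists] unfolding th_def by auto

definition evB :: "int poly \<Rightarrow> 'b" where "evB P = poly (map_poly of_int P) \<omega>0"
definition evA :: "int poly \<Rightarrow> 'a" where "evA P = poly (map_poly of_int P) th"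

lemma evB_add: "evB (P + Q) = evB P + evB Q" unfolding evB_def map_poly_of_int_add by simp
lemma evB_diff: "evB (P - Q) = evB P - evB Q" unfolding evB_def map_poly_of_int_diff by simp
lemma evB_mult: "evB (P * Q) = evB P * evB Q" unfolding evB_def map_poly_of_int_mult by simp
lemma evA_add: "evA (P + Q) = evA P + evA Q" unfolding evA_def map_poly_of_int_add by simp
lemma evA_diff: "evA (P - Q) = evA P - evA Q" unfolding evA_def map_poly_of_int_diff by simp
lemma evA_mult: "evA (P * Q) = evA P * evA Q" unfolding evA_def map_poly_of_int_mult by simp
lemma evA_1: "evA 1 = 1" unfolding evA_def by simp
lemma evB_1: "evB 1 = 1" unfolding evB_def by simp
lemma evA_0: "evA 0 = 0" unfolding evA_def by simp
lemma evB_0: "evB 0 = 0" unfolding evB_def by simp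

lemma ker: "evB P = 0 \<Longrightarrow> evA P = 0"
proof -
  assume "evB P = 0"
  hence "map_poly (of_int::int\<Rightarrow>'a) fp dvd map_poly of_int P" unfolding evB_def by (rule f_div)
  then obtain Q where "map_poly (of_int::int\<Rightarrow>'a) P = map_poly of_int fp * Q" by (auto elim: dvdE)
  thus "evA P = 0" unfolding evA_def using th(1) by simp
qed

lemma evB_surj: "\<exists>P. evB P = y"
proof (cases "y = 0")
  case True thus ?thesis using evB_0 by blast
next
  case False
  then obtain i where "y = \<omega>0 ^ i" using prim0 unfolding primitive_elem_def by blast
  hence "evB (monom 1 i) = y" unfolding evB_def by (simp add: map_poly_monom poly_monom)
  thus ?thesis by blast
qed

definition \<psi> :: "'b \<Rightarrow> 'a" where "\<psi> y = evA (SOME P. evB P = y)"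

lemma \<psi>_ev: "\<psi> (evB P) = evA P"
proof -
  let ?Q = "SOME Q. evB Q = evB P"
  have "evB ?Q = evB P" by (rule someI_ex) blast
  hence "evB (?Q - P) = 0" by (simp add: evB_diff)
  hence "evA (?Q - P) = 0" by (rule ker)
  thus ?thesis unfolding \<psi>_def by (simp add: evA_diff)
qed

lemma \<psi>_add: "\<psi> (x + y) = \<psi> x + \<psi> y"
proof -
  obtain P Q where "evB P = x" "evB Q = y" using evB_surj by blast
  thus ?thesis using \<psi>_ev[of "P + Q"] \<psi>_ev[of P] \<psi>_ev[of Q] by (simp add: evB_add evA_add)
qed

lemma \<psi>_mult: "\<psi> (x * y) = \<psi> x * \<psi> y"
proof -
  obtain P Q where "evB P = x" "evB Q = y" using evB_surj by blast
  thus ?thesis using \<psi>_ev[of "P * Q"] \<psi>_ev[of P] \<psi>_ev[of Q] by (simp add: evB_mult evA_mult)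
qed

lemma \<psi>_1: "\<psi> 1 = 1" using \<psi>_ev[of 1] evA_1 evB_1 by simp
lemma \<psi>_0: "\<psi> 0 = 0" using \<psi>_ev[of 0] evA_0 evB_0 by simp

lemma \<psi>_diff: "\<psi> (x - y) = \<psi> x - \<psi> y"
  using \<psi>_add[of "x - y" y] by (simp add: eq_diff_eq)

lemma \<psi>_nz: "x \<noteq> 0 \<Longrightarrow> \<psi> x \<noteq> 0"
  using \<psi>_mult[of x "inverse x"] \<psi>_1 by auto

lemma \<psi>_inj: "inj \<psi>"
proof (rule injI)
  fix x y assume "\<psi> x = \<psi> y"
  hence "\<psi> (x - y) = 0" by (simp add: \<psi>_diff)
  thus "x = y" using \<psi>_nz[of "x - y"] by auto
qed

lemma \<psi>_eq_iff: "\<psi> x = \<psi> y \<longleftrightarrow> x = y"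
  using \<psi>_inj by (auto dest: injD)

lemma \<psi>_K: "\<psi> x \<in> K"
proof -
  obtain P where P: "evB P = x" using evB_surj by blast
  have "evA P ^ (p^a) = evA P"
  proof -
    have "evA P ^ (p^a) = poly (map_poly of_int P) (th ^ (p^a))"
      unfolding evA_def
      by (rule poly_frob1[OF charA pp, symmetric]) (simp add: coeff_map_poly of_int_pow_char[OF charA pp])
    also have "th ^ (p^a) = th" using th(2) unfolding K_def by simp
    finally show ?thesis unfolding evA_def .
  qed
  thus ?thesis using P \<psi>_ev unfolding K_def by auto
qed

lemma K_eq: "K = {x. poly (monom 1 (p^a) - monom 1 1 :: 'a poly) x = 0}"
  unfolding K_def by (auto simp: poly_monom)

lemma card_K_le: "card K \<le> p^a"
proof -
  have pa: "p^a > 1" using pow_gt1[OF a0] .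
  have nz: "(monom 1 (p^a) - monom 1 1 :: 'a poly) \<noteq> 0"
  proof
    assume "(monom 1 (p^a) - monom 1 1 :: 'a poly) = 0"
    hence "coeff (monom 1 (p^a) - monom 1 1 :: 'a poly) (p^a) = 0" by simp
    thus False using pa by (simp add: coeff_monom)
  qed
  have "card K \<le> degree (monom 1 (p^a) - monom 1 1 :: 'a poly)"
    unfolding K_eq by (rule card_poly_roots_bound[OF nz])
  also have "\<dots> \<le> p^a"
    using pa by (intro degree_diff_le) (auto intro: order.trans[OF degree_monom_le])
  finally show ?thesis .
qed

lemma finite_K: "finite K" by simp

lemma \<psi>_image: "\<psi> ` UNIV = K"
proof (rule card_seteq[OF finite_K])
  show "\<psi> ` UNIV \<subseteq> K" using \<psi>_K by auto
  have "card (\<psi> ` UNIV) = p^a" using card_image[of \<psi> UNIV] \<psi>_inj cardB by simp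
  thus "card K \<le> card (\<psi> ` UNIV)" using card_K_le by simp
qed

lemma card_K: "card K = p^a"
  using \<psi>_image card_image[of \<psi> UNIV] \<psi>_inj cardB by simp

lemma \<psi>_bij: "bij_betw \<psi> UNIV K"
  using \<psi>_inj \<psi>_image by (simp add: bij_betw_def)

lemma \<psi>_pow: "\<psi> (x ^ n) = \<psi> x ^ n"
  by (induction n) (simp_all add: \<psi>_1 \<psi>_mult)

lemma \<psi>_sum: "\<psi> (\<Sum>i\<in>I. f i) = (\<Sum>i\<in>I. \<psi> (f i))"
  by (induction I rule: infinite_finite_induct) (simp_all add: \<psi>_0 \<psi>_add)

lemma \<psi>_trace: "\<psi> (trace_pm p a x) = trace_pm p a (\<psi> x)"
  unfolding trace_pm_def by (simp add: \<psi>_sum \<psi>_pow)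

end


context setting
begin

definition wK :: "'a \<Rightarrow> nat" where "wK y = card {t. t < c \<and> trace_pm p a (y * h^t) \<noteq> 0}"

lemma n_eq: "(p^(a*b) - 1) div k = b*c"
  using qk k0 by simp

lemma c_eq: "(p^a - 1) div u = c"
  using pu u0 by simp

lemma card_split: "card {i. i < b*c \<and> P i} = (\<Sum>j<b. card {t. t < c \<and> P (j + b*t)})"
proof -
  have "{i. i < b*c \<and> P i} = (\<Union>j\<in>{..<b}. (\<lambda>t. j + b*t) ` {t. t < c \<and> P (j + b*t)})"
  proof (intro equalityI subsetI)
    fix i assume i: "i \<in> {i. i < b*c \<and> P i}"
    have e: "i = i mod b + b * (i div b)" by simp
    have "i mod b < b" using b0 by simp
    moreover have "i div b < c" using i by (simp add: less_mult_imp_div_less mult.commute)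
    ultimately show "i \<in> (\<Union>j\<in>{..<b}. (\<lambda>t. j + b*t) ` {t. t < c \<and> P (j + b*t)})"
      using i e by (auto intro!: bexI[of _ "i mod b"] image_eqI[of _ _ "i div b"])
  next
    fix i assume "i \<in> (\<Union>j\<in>{..<b}. (\<lambda>t. j + b*t) ` {t. t < c \<and> P (j + b*t)})"
    then obtain j t where jt: "j < b" "t < c" "P (j + b*t)" "i = j + b*t" by auto
    have "j + b*t < b*(t+1)" using jt by simp
    also have "\<dots> \<le> b*c" using jt by (intro mult_le_mono2) simp
    finally show "i \<in> {i. i < b*c \<and> P i}" using jt by simp
  qed
  also have "card \<dots> = (\<Sum>j<b. card ((\<lambda>t. j + b*t) ` {t. t < c \<and> P (j + b*t)}))"
  proof (rule card_UN_disjoint)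
    show "finite {..<b}" by simp
    show "\<forall>j\<in>{..<b}. finite ((\<lambda>t. j + b*t) ` {t. t < c \<and> P (j + b*t)})" by simp
    show "\<forall>j\<in>{..<b}. \<forall>j'\<in>{..<b}. j \<noteq> j' \<longrightarrow>
      (\<lambda>t. j + b*t) ` {t. t < c \<and> P (j + b*t)} \<inter> (\<lambda>t. j' + b*t) ` {t. t < c \<and> P (j' + b*t)} = {}"
    proof (intro ballI impI)
      fix j j' assume j: "j \<in> {..<b}" "j' \<in> {..<b}" "j \<noteq> j'"
      show "(\<lambda>t. j + b*t) ` {t. t < c \<and> P (j + b*t)} \<inter> (\<lambda>t. j' + b*t) ` {t. t < c \<and> P (j' + b*t)} = {}"
      proof (rule ccontr)
        assume "\<not> ?thesis"
        then obtain t t' where "j + b*t = j' + b*t'" by blast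
        hence "(j + b*t) mod b = (j' + b*t') mod b" by simp
        thus False using j by simp
      qed
    qed
  qed
  also have "\<dots> = (\<Sum>j<b. card {t. t < c \<and> P (j + b*t)})"
    using b0 by (intro sum.cong refl card_image) (auto simp: inj_on_def)
  finally show ?thesis .
qed

lemma cweight_A: "cweight p (a*b) k \<omega> \<gamma> = (\<Sum>j<b. wK (T (\<gamma> * g^j)))"
proof -
  have "cweight p (a*b) k \<omega> \<gamma> = card {i. i < b*c \<and> trace_pm p (a*b) (\<gamma> * \<omega> ^ (k * i)) \<noteq> 0}"
    unfolding cweight_def n_eq ..
  also have "\<dots> = (\<Sum>j<b. card {t. t < c \<and> trace_pm p (a*b) (\<gamma> * \<omega> ^ (k * (j + b*t))) \<noteq> 0})"
    by (rule card_split)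
  also have "\<dots> = (\<Sum>j<b. wK (T (\<gamma> * g^j)))"
  proof (rule sum.cong[OF refl])
    fix j
    have "trace_pm p (a*b) (\<gamma> * \<omega> ^ (k * (j + b*t))) = trace_pm p a (T (\<gamma> * g^j) * h^t)" for t
    proof -
      have e1: "k*(j+b*t) = k*j + (k*b)*t" by (simp add: algebra_simps)
      have "g^j = \<omega>^(k*j)" unfolding g_def by (simp add: power_mult)
      moreover have "h^t = \<omega>^((k*b)*t)" unfolding h_def g_def by (simp add: power_mult)
      ultimately have "\<omega> ^ (k * (j + b*t)) = g^j * h^t" unfolding e1 by (simp add: power_add)
      hence "trace_pm p (a*b) (\<gamma> * \<omega> ^ (k * (j + b*t))) = trace_pm p a (T (h^t * (\<gamma> * g^j)))"
        by (simp add: trace_T mult_ac)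
      also have "T (h^t * (\<gamma> * g^j)) = h^t * T (\<gamma> * g^j)" by (rule T_scal[OF K_power[OF h_K]])
      finally show ?thesis by (simp add: mult_ac)
    qed
    thus "card {t. t < c \<and> trace_pm p (a*b) (\<gamma> * \<omega> ^ (k * (j + b*t))) \<noteq> 0} = wK (T (\<gamma> * g^j))"
      unfolding wK_def by simp
  qed
  finally show ?thesis .
qed

lemma roots_c_card: "card {y::'a. y^c = 1} \<le> c"
proof -
  have nz: "(monom 1 c - 1 :: 'a poly) \<noteq> 0"
  proof
    assume "(monom 1 c - 1 :: 'a poly) = 0"
    hence "coeff (monom 1 c - 1 :: 'a poly) c = 0" by simp
    thus False using c0 by (simp add: coeff_monom)
  qed
  have e: "{y::'a. y^c = 1} = {y. poly (monom 1 c - 1) y = 0}" by (auto simp: poly_monom)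
  have "card {y::'a. y^c = 1} \<le> degree (monom 1 c - 1 :: 'a poly)"
    unfolding e by (rule card_poly_roots_bound[OF nz])
  also have "\<dots> \<le> c" by (intro degree_diff_le) (auto intro: order.trans[OF degree_monom_le])
  finally show ?thesis .
qed

lemma cyc:
  fixes x :: 'a
  assumes ord: "\<And>t. x^t = 1 \<longleftrightarrow> c dvd t"
  shows "inj_on (\<lambda>t. x^t) {..<c}" "(\<lambda>t. x^t) ` {..<c} = {y. y^c = 1}"
proof -
  show inj: "inj_on (\<lambda>t. x^t) {..<c}"
    using ord_lemma[OF c0 ord] by (auto simp: inj_on_def)
  show "(\<lambda>t. x^t) ` {..<c} = {y. y^c = 1}"
  proof (rule card_seteq)
    show "finite {y::'a. y^c = 1}" by simp
    have "x^c = 1" using ord by simp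
    hence "(x^t)^c = 1" for t
    proof -
      have "(x^t)^c = (x^c)^t" by (simp only: power_mult[symmetric] mult.commute)
      thus ?thesis using \<open>x^c = 1\<close> by simp
    qed
    thus "(\<lambda>t. x^t) ` {..<c} \<subseteq> {y. y^c = 1}" by auto
    show "card {y::'a. y^c = 1} \<le> card ((\<lambda>t. x^t) ` {..<c})"
      using roots_c_card card_image[OF inj] by simp
  qed
qed

lemma card_cyc:
  fixes x :: 'a
  assumes ord: "\<And>t. x^t = 1 \<longleftrightarrow> c dvd t"
  shows "card {t. t < c \<and> Q (x^t)} = card {y. y^c = 1 \<and> Q y}"
proof -
  note C2 = cyc(2)[OF ord]
  have "(\<lambda>t. x^t) ` {t. t < c \<and> Q (x^t)} = {y. y^c = 1 \<and> Q y}"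
  proof (intro equalityI subsetI)
    fix y assume "y \<in> (\<lambda>t. x^t) ` {t. t < c \<and> Q (x^t)}"
    then obtain t where t: "t < c" "Q (x^t)" "y = x^t" by auto
    have "x^t \<in> (\<lambda>t. x^t) ` {..<c}" using t by auto
    hence "(x^t)^c = 1" unfolding C2 by simp
    thus "y \<in> {y. y^c = 1 \<and> Q y}" using t by simp
  next
    fix y assume y: "y \<in> {y. y^c = 1 \<and> Q y}"
    hence "y \<in> (\<lambda>t. x^t) ` {..<c}" unfolding C2 by simp
    then obtain t where "t < c" "y = x^t" by auto
    thus "y \<in> (\<lambda>t. x^t) ` {t. t < c \<and> Q (x^t)}" using y by auto
  qed
  moreover have "inj_on (\<lambda>t. x^t) {t. t < c \<and> Q (x^t)}"
    using cyc(1)[OF ord] by (rule inj_on_subset) auto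
  ultimately show ?thesis using card_image[of "\<lambda>t. x^t" "{t. t < c \<and> Q (x^t)}"] by simp
qed

lemma wK_alt: "wK y = card {z. z^c = 1 \<and> trace_pm p a (y * z) \<noteq> 0}"
  unfolding wK_def by (rule card_cyc[OF h_pow1])

lemma cweight_B: "cweight p a u \<omega>0 \<beta> = wK (\<psi> \<beta>)"
proof -
  define h0 where "h0 = \<omega>0 ^ u"
  have ordh0: "h0 ^ t = 1 \<longleftrightarrow> c dvd t" for t
  proof -
    have "h0 ^ t = \<omega>0 ^ (u*t)" unfolding h0_def by (simp add: power_mult)
    also have "\<dots> = 1 \<longleftrightarrow> (u*c) dvd (u*t)" unfolding w0_pow1 pu by (simp add: mult.commute)
    also have "\<dots> \<longleftrightarrow> c dvd t" using u0 by simp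
    finally show ?thesis .
  qed
  have ordp: "(\<psi> h0) ^ t = 1 \<longleftrightarrow> c dvd t" for t
    using ordh0[of t] \<psi>_eq_iff[of "h0^t" 1] by (simp add: \<psi>_pow \<psi>_1)
  have "cweight p a u \<omega>0 \<beta> = card {t. t < c \<and> trace_pm p a (\<beta> * \<omega>0 ^ (u * t)) \<noteq> 0}"
    unfolding cweight_def c_eq ..
  also have "\<dots> = card {t. t < c \<and> trace_pm p a (\<psi> \<beta> * (\<psi> h0) ^ t) \<noteq> 0}"
  proof -
    have "trace_pm p a (\<beta> * \<omega>0 ^ (u * t)) \<noteq> 0 \<longleftrightarrow> trace_pm p a (\<psi> \<beta> * (\<psi> h0) ^ t) \<noteq> 0" for t
    proof -
      have "trace_pm p a (\<psi> \<beta> * (\<psi> h0) ^ t) = \<psi> (trace_pm p a (\<beta> * \<omega>0 ^ (u * t)))"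
        unfolding h0_def by (simp add: \<psi>_trace \<psi>_mult \<psi>_pow power_mult)
      thus ?thesis using \<psi>_eq_iff[of _ 0] \<psi>_0 by simp
    qed
    thus ?thesis by simp
  qed
  also have "\<dots> = card {z. z^c = 1 \<and> trace_pm p a (\<psi> \<beta> * z) \<noteq> 0}"
    by (rule card_cyc[OF ordp])
  also have "\<dots> = wK (\<psi> \<beta>)" unfolding wK_alt ..
  finally show ?thesis .
qed

end


lemma bij_betw_card_filter:
  assumes "bij_betw f A B"
  shows "card {x\<in>A. P (f x)} = card {y\<in>B. P y}"
proof -
  have "bij_betw f {x\<in>A. P (f x)} {y\<in>B. P y}"
    using assms unfolding bij_betw_def by (auto simp: inj_on_def)
  thus ?thesis by (rule bij_betw_same_card)
qed

context setting
begin

definition "Lk = {xs. set xs \<subseteq> K \<and> length xs = b}"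
definition \<Phi> :: "'a \<Rightarrow> 'a list" where "\<Phi> \<gamma> = map (\<lambda>j. T (\<gamma> * g^j)) [0..<b]"
definition E :: "'a list \<Rightarrow> 'a" where "E xs = (\<Sum>j<b. xs!j * g^j)"

lemma card_Lk: "card Lk = p^(a*b)"
  unfolding Lk_def card_lists_length_eq[OF finite_K] card_K by (simp add: power_mult)

lemma E_inj: "inj_on E Lk"
proof (rule inj_onI)
  fix xs ys assume xs: "xs \<in> Lk" and ys: "ys \<in> Lk" and eq: "E xs = E ys"
  define Q :: "'a poly" where "Q = (\<Sum>j<b. monom (xs!j - ys!j) j)"
  have cQ: "coeff Q i = (if i < b then xs!i - ys!i else 0)" for i
    unfolding Q_def by (rule coeff_sum_monom)
  have inK: "xs!i - ys!i \<in> K" if "i < b" for i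
  proof -
    have "xs!i \<in> set xs" "ys!i \<in> set ys" using xs ys that unfolding Lk_def by auto
    thus ?thesis using xs ys unfolding Lk_def by (intro K_diff) auto
  qed
  have "Q = 0"
  proof (rule indep_lemma[OF charA pp, of Q a b g])
    show "coeff Q i ^ (p^a) = coeff Q i" for i
      unfolding cQ using inK[of i] p2 unfolding K_def by (auto simp: power_0_left)
    show "degree Q < b" unfolding Q_def by (rule degree_sum_monom[OF b0])
    show "poly Q g = 0" unfolding Q_def poly_sum_monom using eq unfolding E_def
      by (simp add: left_diff_distrib sum_subtractf)
    show "inj_on (\<lambda>i. g ^ (p ^ (a * i))) {..<b}" by (rule g_inj)
  qed
  hence "xs!i = ys!i" if "i < b" for i using cQ[of i] that by simp
  moreover have "length xs = b" "length ys = b" using xs ys unfolding Lk_def by auto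
  ultimately show "xs = ys" by (intro nth_equalityI) auto
qed

lemma E_surj: "E ` Lk = UNIV"
proof -
  have "card (E ` Lk) = card (UNIV :: 'a set)" using card_image[OF E_inj] card_Lk cardA by simp
  thus ?thesis by (intro card_subset_eq) auto
qed

lemma T_sum: "T (\<Sum>i\<in>I. f i) = (\<Sum>i\<in>I. T (f i))"
  by (induction I rule: infinite_finite_induct) (simp_all add: T_0 T_add)

lemma T_not_zero: "\<exists>y. T y \<noteq> 0"
proof (rule ccontr)
  assume "\<not> ?thesis"
  hence allz: "T y = 0" for y by simp
  define PT :: "'a poly" where "PT = (\<Sum>l<b. monom 1 (p^(a*l)))"
  have polyPT: "poly PT y = T y" for y unfolding PT_def T_def by (simp add: poly_sum poly_monom)
  have coeffPT: "coeff PT m = (\<Sum>l<b. if p^(a*l) = m then 1 else 0)" for m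
    unfolding PT_def by (simp add: coeff_sum coeff_monom)
  have "coeff PT 1 = (\<Sum>l<b. if l = 0 then 1 else 0)"
    unfolding coeffPT
  proof (rule sum.cong[OF refl])
    fix l
    have "p^(a*l) = 1 \<longleftrightarrow> l = 0" using p2 a0 by (simp add: power_eq_1_iff)
    thus "(if p^(a*l) = 1 then 1 else 0) = (if l = 0 then 1 else (0::'a))" by simp
  qed
  also have "\<dots> = 1" using b0 by simp
  finally have PT0: "PT \<noteq> 0" by auto
  have "degree PT < p^(a*b)"
  proof (rule degree_lessI)
    show "PT \<noteq> 0 \<or> 0 < p^(a*b)" using PT0 by simp
    show "\<forall>m\<ge>p^(a*b). coeff PT m = 0"
    proof (intro allI impI)
      fix m assume m: "m \<ge> p^(a*b)"
      have "p^(a*l) \<noteq> m" if "l < b" for l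
      proof -
        have "p^(a*l) < p^(a*b)" using that p2 a0 by (intro power_strict_increasing) auto
        thus ?thesis using m by simp
      qed
      thus "coeff PT m = 0" unfolding coeffPT by simp
    qed
  qed
  moreover have "card (UNIV :: 'a set) \<le> card {y. poly PT y = 0}"
    using polyPT allz by simp
  moreover have "card {y. poly PT y = 0} \<le> degree PT" by (rule card_poly_roots_bound[OF PT0])
  ultimately show False using cardA by simp
qed

lemma T_zero_all:
  assumes "\<And>j. j < b \<Longrightarrow> T (\<delta> * g^j) = 0"
  shows "\<delta> = 0"
proof (rule ccontr)
  assume d0: "\<delta> \<noteq> 0"
  have "T (\<delta> * y) = 0" for y
  proof -
    obtain xs where xs: "xs \<in> Lk" "y = E xs" using E_surj by (metis UNIV_I imageE)
    have "T (\<delta> * y) = (\<Sum>j<b. T (xs!j * (\<delta> * g^j)))"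
      unfolding xs E_def by (simp add: sum_distrib_left T_sum mult_ac)
    also have "\<dots> = (\<Sum>j<b. xs!j * T (\<delta> * g^j))"
    proof (rule sum.cong[OF refl])
      fix j assume "j \<in> {..<b}"
      hence "xs!j \<in> set xs" using xs unfolding Lk_def by auto
      hence "xs!j \<in> K" using xs unfolding Lk_def by auto
      thus "T (xs!j * (\<delta> * g^j)) = xs!j * T (\<delta> * g^j)" by (rule T_scal)
    qed
    also have "\<dots> = 0" using assms by simp
    finally show ?thesis .
  qed
  hence "T y = 0" for y using d0 by (metis mult.commute nonzero_eq_divide_eq)
  thus False using T_not_zero by blast
qed

lemma \<Phi>_nth: "j < b \<Longrightarrow> \<Phi> \<gamma> ! j = T (\<gamma> * g^j)"
  unfolding \<Phi>_def by simp

lemma \<Phi>_bij: "bij_betw \<Phi> UNIV Lk"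
proof -
  have inj: "inj \<Phi>"
  proof (rule injI)
    fix x y assume eq: "\<Phi> x = \<Phi> y"
    have "T ((x - y) * g^j) = 0" if "j < b" for j
      using arg_cong[OF eq, of "\<lambda>l. l!j"] that by (simp add: \<Phi>_nth left_diff_distrib T_diff)
    hence "x - y = 0" by (rule T_zero_all)
    thus "x = y" by simp
  qed
  have sub: "\<Phi> ` UNIV \<subseteq> Lk" unfolding Lk_def \<Phi>_def using T_K by auto
  have "card (\<Phi> ` UNIV) = card Lk" using card_image[OF inj] cardA card_Lk by simp
  hence "\<Phi> ` UNIV = Lk" using sub by (intro card_subset_eq) (auto simp: Lk_def finite_lists_length_eq finite_K)
  thus ?thesis using inj by (simp add: bij_betw_def)
qed

lemma freq_A: "freq p (a*b) k \<omega> w = card {xs \<in> Lk. sum_list (map wK xs) = w}"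
proof -
  have "cweight p (a*b) k \<omega> \<gamma> = sum_list (map wK (\<Phi> \<gamma>))" for \<gamma>
  proof -
    have "sum_list (map wK (\<Phi> \<gamma>)) = sum_list (map (\<lambda>j. wK (T (\<gamma> * g^j))) [0..<b])"
      unfolding \<Phi>_def by (simp add: comp_def)
    also have "\<dots> = (\<Sum>j\<in>set [0..<b]. wK (T (\<gamma> * g^j)))" by (rule sum_set_upt_conv_sum_list_nat[symmetric])
    also have "\<dots> = (\<Sum>j<b. wK (T (\<gamma> * g^j)))" by (simp add: atLeast0LessThan)
    finally show ?thesis using cweight_A by simp
  qed
  hence "freq p (a*b) k \<omega> w = card {\<gamma>\<in>UNIV. sum_list (map wK (\<Phi> \<gamma>)) = w}"
    unfolding freq_def k_def[symmetric] by simp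
  also have "\<dots> = card {xs \<in> Lk. sum_list (map wK xs) = w}"
    by (rule bij_betw_card_filter[OF \<Phi>_bij])
  finally show ?thesis .
qed

lemma map_\<psi>_bij: "bij_betw (map \<psi>) {ys. length ys = b} Lk"
proof -
  have inj: "inj_on (map \<psi>) {ys. length ys = b}"
    using \<psi>_inj by (auto simp: inj_on_def)
  have "map \<psi> ` {ys. length ys = b} = Lk"
  proof (intro equalityI subsetI)
    fix xs assume "xs \<in> map \<psi> ` {ys. length ys = b}"
    thus "xs \<in> Lk" unfolding Lk_def using \<psi>_K by auto
  next
    fix xs assume xs: "xs \<in> Lk"
    have "map (\<psi> \<circ> inv \<psi>) xs = xs"
    proof (rule map_idI)
      fix x assume "x \<in> set xs"
      hence "x \<in> range \<psi>" using xs \<psi>_image unfolding Lk_def by auto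
      thus "(\<psi> \<circ> inv \<psi>) x = x" unfolding comp_def by (rule f_inv_into_f)
    qed
    hence "map \<psi> (map (inv \<psi>) xs) = xs" by simp
    moreover have "length (map (inv \<psi>) xs) = b" using xs unfolding Lk_def by simp
    ultimately show "xs \<in> map \<psi> ` {ys. length ys = b}" by (metis (mono_tags) image_eqI mem_Collect_eq)
  qed
  thus ?thesis using inj by (simp add: bij_betw_def)
qed

lemma freq_A_B: "freq p (a*b) k \<omega> w =
   card {ys::'b list. length ys = b \<and> sum_list (map (cweight p a u \<omega>0) ys) = w}"
proof -
  have "freq p (a*b) k \<omega> w = card {xs \<in> Lk. sum_list (map wK xs) = w}" by (rule freq_A)
  also have "\<dots> = card {ys \<in> {ys. length ys = b}. sum_list (map wK (map \<psi> ys)) = w}"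
    by (rule bij_betw_card_filter[OF map_\<psi>_bij, symmetric])
  also have "\<dots> = card {ys::'b list. length ys = b \<and> sum_list (map (cweight p a u \<omega>0) ys) = w}"
  proof -
    have "cweight p a u \<omega>0 = (\<lambda>\<beta>. wK (\<psi> \<beta>))" by (rule ext) (rule cweight_B)
    thus ?thesis by (simp add: comp_def)
  qed
  finally show ?thesis .
qed

end


lemma list_sum_count:
  assumes "finite W" "set ws \<subseteq> W"
  shows "sum_list ws = (\<Sum>v\<in>W. count (mset ws) v * v)"
  using assms(2)
proof (induction ws)
  case Nil thus ?case by simp
next
  case (Cons x ws)
  have xW: "x \<in> W" using Cons.prems by simp
  have "(\<Sum>v\<in>W. count (mset (x#ws)) v * v) = (\<Sum>v\<in>W. count (mset ws) v * v + (if v = x then v else 0))"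
    by (rule sum.cong) auto
  also have "\<dots> = (\<Sum>v\<in>W. count (mset ws) v * v) + x"
    using assms(1) xW by (simp add: sum.distrib)
  finally show ?case using Cons by simp
qed

lemma list_len_count:
  assumes "finite W" "set ws \<subseteq> W"
  shows "length ws = (\<Sum>v\<in>W. count (mset ws) v)"
  using assms(2)
proof (induction ws)
  case Nil thus ?case by simp
next
  case (Cons x ws)
  have xW: "x \<in> W" using Cons.prems by simp
  have "(\<Sum>v\<in>W. count (mset (x#ws)) v) = (\<Sum>v\<in>W. count (mset ws) v + (if v = x then 1 else 0))"
    by (rule sum.cong) auto
  also have "\<dots> = (\<Sum>v\<in>W. count (mset ws) v) + 1"
    using assms(1) xW by (simp add: sum.distrib)
  finally show ?case using Cons by simp
qed

lemma list_prod_count: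
  fixes A :: "'c \<Rightarrow> nat"
  assumes "finite W" "set ws \<subseteq> W"
  shows "prod_list (map A ws) = (\<Prod>v\<in>W. A v ^ count (mset ws) v)"
  using assms(2)
proof (induction ws)
  case Nil thus ?case by simp
next
  case (Cons x ws)
  have xW: "x \<in> W" using Cons.prems by simp
  have "(\<Prod>v\<in>W. A v ^ count (mset (x#ws)) v) = (\<Prod>v\<in>W. A v ^ count (mset ws) v * (if v = x then A v else 1))"
    by (rule prod.cong) auto
  also have "\<dots> = (\<Prod>v\<in>W. A v ^ count (mset ws) v) * A x"
    using assms(1) xW by (simp add: prod.distrib prod.delta)
  finally show ?case using Cons by simp
qed

lemma card_fiber:
  fixes f :: "'c::finite \<Rightarrow> 'd"
  shows "card {ys. map f ys = ws} = prod_list (map (\<lambda>v. card {x. f x = v}) ws)"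
proof (induction ws)
  case Nil thus ?case by simp
next
  case (Cons w ws)
  have "{ys. map f ys = w#ws} = (\<lambda>(x,ys). x#ys) ` ({x. f x = w} \<times> {ys. map f ys = ws})"
    by (auto simp: map_eq_Cons_conv)
  moreover have "inj_on (\<lambda>(x,ys). x#ys) ({x. f x = w} \<times> {ys. map f ys = ws})"
    by (auto simp: inj_on_def)
  ultimately have "card {ys. map f ys = w#ws} = card ({x. f x = w} \<times> {ys. map f ys = ws})"
    by (simp add: card_image)
  thus ?case using Cons by (simp add: card_cartesian_product)
qed

lemma finite_len: "finite {ys::'c::finite list. length ys = n}"
  using finite_lists_length_eq[of "UNIV::'c set" n] by simp

lemma comb:
  fixes f :: "'c::finite \<Rightarrow> nat"
  defines "W0 \<equiv> range f"
  shows "card {ys::'c list. length ys = b \<and> sum_list (map f ys) = w} =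
    (\<Sum>l \<in> {l \<in> PiE W0 (\<lambda>_. {0..b}). sum l W0 = b \<and> (\<Sum>v\<in>W0. l v * v) = w}.
          multinom b l W0 * (\<Prod>v\<in>W0. card {x. f x = v} ^ l v))"
proof -
  define A where "A v = card {x. f x = v}" for v
  define LS where "LS = {l \<in> PiE W0 (\<lambda>_. {0..b}). sum l W0 = b \<and> (\<Sum>v\<in>W0. l v * v) = w}"
  define Y where "Y l = {ys. length ys = b \<and> (\<forall>v\<in>W0. count (mset (map f ys)) v = l v)}" for l
  have fW: "finite W0" unfolding W0_def by simp
  have setW: "set (map f ys) \<subseteq> W0" for ys unfolding W0_def by auto
  have fLS: "finite LS" unfolding LS_def
    by (rule finite_subset[OF _ finite_PiE[OF fW, of "\<lambda>_. {0..b}"]]) auto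
  have fY: "finite (Y l)" for l unfolding Y_def by (rule finite_subset[OF _ finite_len[of b]]) auto
  have eq1: "{ys::'c list. length ys = b \<and> sum_list (map f ys) = w} = (\<Union>l\<in>LS. Y l)"
  proof (intro equalityI subsetI)
    fix ys assume ys: "ys \<in> {ys::'c list. length ys = b \<and> sum_list (map f ys) = w}"
    define l where "l = restrict (\<lambda>v. count (mset (map f ys)) v) W0"
    have "l \<in> PiE W0 (\<lambda>_. {0..b})"
    proof -
      have "count (mset (map f ys)) v \<le> b" for v
        using count_le_size[of "mset (map f ys)" v] ys by simp
      thus ?thesis unfolding l_def by auto
    qed
    moreover have "sum l W0 = b"
      using list_len_count[OF fW setW, of ys] ys unfolding l_def by simp
    moreover have "(\<Sum>v\<in>W0. l v * v) = w"
      using list_sum_count[OF fW setW, of ys] ys unfolding l_def by simp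
    ultimately have "l \<in> LS" unfolding LS_def by simp
    moreover have "ys \<in> Y l" unfolding Y_def l_def using ys by simp
    ultimately show "ys \<in> (\<Union>l\<in>LS. Y l)" by blast
  next
    fix ys assume "ys \<in> (\<Union>l\<in>LS. Y l)"
    then obtain l where l: "l \<in> LS" "ys \<in> Y l" by blast
    have "sum_list (map f ys) = (\<Sum>v\<in>W0. count (mset (map f ys)) v * v)"
      by (rule list_sum_count[OF fW setW])
    also have "\<dots> = (\<Sum>v\<in>W0. l v * v)" using l(2) unfolding Y_def by simp
    also have "\<dots> = w" using l(1) unfolding LS_def by simp
    finally show "ys \<in> {ys::'c list. length ys = b \<and> sum_list (map f ys) = w}"
      using l(2) unfolding Y_def by simp
  qed
  have disj: "Y l \<inter> Y l' = {}" if "l \<in> LS" "l' \<in> LS" "l \<noteq> l'" for l l'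
  proof -
    have "\<exists>v\<in>W0. l v \<noteq> l' v"
    proof (rule ccontr)
      assume "\<not> ?thesis"
      hence "l = l'" using that(1,2) unfolding LS_def by (intro PiE_ext[of l W0 "\<lambda>_. {0..b}" l']) auto
      thus False using that(3) by simp
    qed
    thus ?thesis unfolding Y_def by auto
  qed
  have cardY: "card (Y l) = multinom b l W0 * (\<Prod>v\<in>W0. A v ^ l v)" if lLS: "l \<in> LS" for l
  proof -
    define M where "M = (\<Sum>v\<in>W0. replicate_mset (l v) v)"
    have cM: "count M v = (if v \<in> W0 then l v else 0)" for v
      unfolding M_def using fW by (simp add: count_sum)
    have sM: "set_mset M \<subseteq> W0"
    proof
      fix x assume "x \<in># M"
      hence "count M x \<noteq> 0" by simp
      thus "x \<in> W0" using cM[of x] by (cases "x \<in> W0") auto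
    qed
    have sumb: "sum l W0 = b" using lLS unfolding LS_def by simp
    define P where "P = permutations_of_multiset M"
    have YP: "Y l = (\<Union>ws\<in>P. {ys. map f ys = ws})"
    proof (intro equalityI subsetI)
      fix ys assume ys: "ys \<in> Y l"
      have "mset (map f ys) = M"
      proof (rule multiset_eqI)
        fix v show "count (mset (map f ys)) v = count M v"
        proof (cases "v \<in> W0")
          case True thus ?thesis using ys cM unfolding Y_def by simp
        next
          case False
          hence "v \<notin> set (map f ys)" using setW by auto
          hence "count (mset (map f ys)) v = 0" by (rule count_mset_0_iff[THEN iffD2])
          moreover have "count M v = 0" using cM False by simp
          ultimately show ?thesis by (simp only:)
        qed
      qed
      thus "ys \<in> (\<Union>ws\<in>P. {ys. map f ys = ws})" unfolding P_def
        by (auto intro: permutations_of_multisetI)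
    next
      fix ys assume "ys \<in> (\<Union>ws\<in>P. {ys. map f ys = ws})"
      hence mM: "mset (map f ys) = M" unfolding P_def by (auto dest: permutations_of_multisetD)
      have "length ys = (\<Sum>v\<in>W0. count (mset (map f ys)) v)"
        using list_len_count[OF fW setW, of ys] by simp
      also have "\<dots> = b" unfolding mM cM using sumb by simp
      finally show "ys \<in> Y l" unfolding Y_def using mM cM by simp
    qed
    have "card (Y l) = (\<Sum>ws\<in>P. card {ys. map f ys = ws})"
      unfolding YP
    proof (rule card_UN_disjoint)
      show "finite P" unfolding P_def by simp
      show "\<forall>ws\<in>P. finite {ys. map f ys = ws}"
      proof
        fix ws show "finite {ys. map f ys = ws}"
          by (rule finite_subset[OF _ finite_len[of "length ws"]]) auto
      qed
      show "\<forall>ws\<in>P. \<forall>ws'\<in>P. ws \<noteq> ws' \<longrightarrow> {ys. map f ys = ws} \<inter> {ys. map f ys = ws'} = {}" by auto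
    qed
    also have "\<dots> = (\<Sum>ws\<in>P. (\<Prod>v\<in>W0. A v ^ l v))"
    proof (rule sum.cong[OF refl])
      fix ws assume ws: "ws \<in> P"
      hence mws: "mset ws = M" unfolding P_def by (rule permutations_of_multisetD)
      have sws: "set ws \<subseteq> W0" using sM mws by (metis set_mset_mset)
      have "card {ys. map f ys = ws} = prod_list (map A ws)" unfolding A_def by (rule card_fiber)
      also have "\<dots> = (\<Prod>v\<in>W0. A v ^ count (mset ws) v)" by (rule list_prod_count[OF fW sws])
      also have "\<dots> = (\<Prod>v\<in>W0. A v ^ l v)" unfolding mws cM by simp
      finally show "card {ys. map f ys = ws} = (\<Prod>v\<in>W0. A v ^ l v)" .
    qed
    also have "\<dots> = card P * (\<Prod>v\<in>W0. A v ^ l v)" by simp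
    also have "card P = multinom b l W0"
    proof -
      have "size M = sum (count M) (set_mset M)" by (rule size_multiset_overloaded_eq)
      also have "\<dots> = sum (count M) W0"
        using sM fW by (intro sum.mono_neutral_left) (auto simp: count_eq_zero_iff)
      also have "\<dots> = b" using cM sumb by simp
      finally have sz: "size M = b" .
      have "(\<Prod>x\<in>set_mset M. fact (count M x)) = (\<Prod>x\<in>W0. fact (count M x) :: nat)"
        using sM fW by (intro prod.mono_neutral_left) (auto simp: not_in_iff)
      also have "\<dots> = (\<Prod>x\<in>W0. fact (l x))" using cM by simp
      finally have pr: "(\<Prod>x\<in>set_mset M. fact (count M x)) = (\<Prod>x\<in>W0. fact (l x) :: nat)" .
      show ?thesis unfolding P_def card_permutations_of_multiset(1) sz pr multinom_def ..
    qed
    finally show ?thesis .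
  qed
  have "card {ys::'c list. length ys = b \<and> sum_list (map f ys) = w} = (\<Sum>l\<in>LS. card (Y l))"
    unfolding eq1 using fLS fY disj by (intro card_UN_disjoint) auto
  also have "\<dots> = (\<Sum>l\<in>LS. multinom b l W0 * (\<Prod>v\<in>W0. A v ^ l v))"
    using cardY by simp
  finally show ?thesis unfolding LS_def A_def .
qed


theorem theorem2p2:
  fixes p a b c :: nat
    and \<omega> :: "'a::{finite,field}"
    and \<omega>0 :: "'b::{finite,field}"
  assumes "prime p" and "a > 0" and "b > 1" and "c > 0"
    and "primitive_divisor p a c"
    and "(p - 1) dvd c"
    and "primitive_divisor p (a * b) (b * c)"
    and "card (UNIV::'a set) = p ^ (a * b)" and "card (UNIV::'b set) = p ^ a"
    and "primitive_elem \<omega>" and "primitive_elem \<omega>0"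
  shows "\<forall>w::nat.
    freq p (a * b) ((p ^ (a * b) - 1) div (b * c)) \<omega> w =
    (let u = (p ^ a - 1) div c;
         W0 = range (cweight p a u \<omega>0)
     in \<Sum>l \<in> {l \<in> PiE W0 (\<lambda>_. {0..b}). sum l W0 = b \<and> (\<Sum>v\<in>W0. l v * v) = w}.
          multinom b l W0 * (\<Prod>v\<in>W0. freq p a u \<omega>0 v ^ l v))"
proof -
  interpret setting p a b c \<omega> \<omega>0
    using assms by unfold_locales auto
  show ?thesis
  proof
    fix w
    have "freq p (a * b) ((p ^ (a * b) - 1) div (b * c)) \<omega> w = freq p (a*b) k \<omega> w"
      by (simp add: k_def)
    also have "\<dots> = card {ys::'b list. length ys = b \<and> sum_list (map (cweight p a u \<omega>0) ys) = w}"
      by (rule freq_A_B)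
    also have "\<dots> = (\<Sum>l \<in> {l \<in> PiE (range (cweight p a u \<omega>0)) (\<lambda>_. {0..b}).
          sum l (range (cweight p a u \<omega>0)) = b \<and> (\<Sum>v\<in>range (cweight p a u \<omega>0). l v * v) = w}.
          multinom b l (range (cweight p a u \<omega>0)) *
          (\<Prod>v\<in>range (cweight p a u \<omega>0). card {x. cweight p a u \<omega>0 x = v} ^ l v))"
      by (rule comb)
    finally show "freq p (a * b) ((p ^ (a * b) - 1) div (b * c)) \<omega> w =
    (let u = (p ^ a - 1) div c;
         W0 = range (cweight p a u \<omega>0)
     in \<Sum>l \<in> {l \<in> PiE W0 (\<lambda>_. {0..b}). sum l W0 = b \<and> (\<Sum>v\<in>W0. l v * v) = w}.
          multinom b l W0 * (\<Prod>v\<in>W0. freq p a u \<omega>0 v ^ l v))"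
      unfolding Let_def freq_def u_def .
  qed
qed

end
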